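(* Let $\Theta$ and $\Theta'$ be two flow rules defined respectively by positive measurable functions $\phi$ and $\phi'$ via $\Theta_T(i) = \phi(T[i]) / \sum_{j=1}^{\nu_T(\varnothing)} \phi(T[j])$ and $\Theta'_T(i) = \phi'(T[i]) / \sum_{j=1}^{\nu_T(\varnothing)} \phi'(T[j])$ for $1 \leq i \leq \nu_T(\varnothing)$. Then $\Theta_T = \Theta'_T$ almost surely if and only if the functions $\phi$ and $\phi'$ are proportional.
   Context: Trees are rooted, planar, locally finite, leafless trees (Neveu formalism: subsets of finite words on $\{1,2,\dots\}$ containing the root $\varnothing$), each vertex $x$ carrying a non-negative real mark. For a vertex $x$ of a marked tree $t$, $t[x]$ is the reindexed marked subtree rooted at $x$, and $\nu_t(x)$ is the number of children of $x$. Let $\mathbf{p}=(p_k)_{k\ge0}$ be a reproduction law with $p_0 = 0$, $p_1 < 1$ and finite mean $m$, and let $\Gamma$ be a random variable with values in $\mathbb{R}_+$. A $(\Gamma,\mathbf{p})$-Galton-Watson tree $T$ is a Galton-Watson tree with reproduction law $\mathbf{p}$ carrying i.i.d. marks distributed as $\Gamma$; its law is denoted $\mathrm{GW}$. A flow on a tree $t$ is a function $\theta: t\to[0,1]$ with $\theta(\varnothing)=1$ and $\theta(x)=\sum_{i=1}^{\nu_t(x)}\theta(xi)$; a ($\mathrm{GW}$-)flow rule is a measurable map $t\mapsto\Theta_t$, defined on a Borel set of full $\mathrm{GW}$-measure, assigning to each tree a flow with $\Theta_t(x)>0$ for all $x$ and satisfying the consistency relation $\Theta_{t[x]}(y)=\Theta_t(xy)/\Theta_t(x)$.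 Here $\phi$ and $\phi'$ are measurable positive functions defined on a Borel set of marked leafless trees of full $\mathrm{GW}$-measure, and the flow rules are determined on the first generation by the displayed formula and extended by consistency. *)

theory Defs
  imports "HOL-Probability.Probability"
begin

text \<open>A (marked) tree is encoded as a function assigning to every finite word
  over positive integers (Neveu formalism, child of x is x @ [i]) a pair
  (number of children, mark). Only the values on the vertex set matter;
  canonical trees carry (0,0) outside their vertex set.\<close>

type_synonym mtree = "nat list \<Rightarrow> nat \<times> real"

definition nu :: "mtree \<Rightarrow> nat list \<Rightarrow> nat" where
  "nu t x = fst (t x)"

definition mark :: "mtree \<Rightarrow> nat list \<Rightarrow> real" where
  "mark t x = snd (t x)"

definition vert :: "mtree \<Rightarrow> nat list set" where
  "vert t = {x. \<forall>k<length x. 1 \<le> x ! k \<and> x ! k \<le> nu t (take k x)}"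

definition sub :: "mtree \<Rightarrow> nat list \<Rightarrow> mtree" where
  "sub t x = (\<lambda>y. t (x @ y))"

definition MTS :: "mtree measure" where
  "MTS = PiM UNIV (\<lambda>_::nat list. count_space UNIV \<Otimes>\<^sub>M (borel :: real measure))"

text \<open>Tree generated by an i.i.d. family of (offspring number, mark) labels.\<close>
definition canon :: "mtree \<Rightarrow> mtree" where
  "canon w = (\<lambda>x. if x \<in> vert w then w x else (0, 0))"

definition GW :: "nat pmf \<Rightarrow> real measure \<Rightarrow> mtree measure" where
  "GW p G = distr (PiM UNIV (\<lambda>_::nat list. measure_pmf p \<Otimes>\<^sub>M G)) MTS canon"

definition theta1 :: "(mtree \<Rightarrow> real) \<Rightarrow> mtree \<Rightarrow> nat \<Rightarrow> real" where
  "theta1 \<phi> t i = \<phi> (sub t [i]) / (\<Sum>j = 1..nu t []. \<phi> (sub t [j]))"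

text \<open>Extension by consistency: Theta_t(x i) = Theta_t(x) * Theta_{t[x]}(i).\<close>
definition flow :: "(mtree \<Rightarrow> real) \<Rightarrow> mtree \<Rightarrow> nat list \<Rightarrow> real" where
  "flow \<phi> t x = (\<Prod>k<length x. theta1 \<phi> (sub t (take k x)) (x ! k))"

end

theory Submission
  imports Defs
begin

lemma sub_Nil[simp]: "sub t [] = t" by (simp add: sub_def)
lemma sub_sub[simp]: "sub (sub t x) y = sub t (x @ y)" by (simp add: sub_def)
lemma nu_sub[simp]: "nu (sub t x) y = nu t (x @ y)" by (simp add: sub_def nu_def)
lemma vert_Nil[simp]: "[] \<in> vert t" by (simp add: vert_def)

lemma all_less_add: "(\<forall>k<a+b. P (k::nat)) \<longleftrightarrow> (\<forall>k<a. P k) \<and> (\<forall>k<b. P (a+k))"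
  by (metis add_less_cancel_left less_add_eq_less not_add_less1 not_less trans_less_add1 le_Suc_ex)

lemma vert_append: "x @ y \<in> vert t \<longleftrightarrow> x \<in> vert t \<and> y \<in> vert (sub t x)"
  unfolding vert_def mem_Collect_eq length_append all_less_add
  by (simp add: nth_append take_append)

lemma vert_snoc: "x @ [a] \<in> vert t \<longleftrightarrow> x \<in> vert t \<and> 1 \<le> a \<and> a \<le> nu t x"
  unfolding vert_append by (simp add: vert_def)

lemma vert_canon: "x \<in> vert (canon w) \<longleftrightarrow> x \<in> vert w"
proof (induction x rule: rev_induct)
  case (snoc a x)
  then show ?case by (auto simp: vert_snoc nu_def canon_def)
qed simp

lemma sub_canon: "x \<in> vert w \<Longrightarrow> sub (canon w) x = canon (sub w x)"
  by (auto simp: sub_def canon_def fun_eq_iff vert_append[unfolded sub_def])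

lemma nu_canon_Nil[simp]: "nu (canon w) [] = nu w []"
  by (simp add: canon_def nu_def)

lemma nu_meas[measurable]: "(\<lambda>t. nu t z) \<in> measurable MTS (count_space UNIV)"
  unfolding nu_def MTS_def by measurable

lemma vert_pred[measurable]: "Measurable.pred MTS (\<lambda>t. x \<in> vert t)"
  unfolding vert_def mem_Collect_eq by measurable

lemma sub_meas[measurable]: "(\<lambda>t. sub t x) \<in> measurable MTS MTS"
  unfolding sub_def MTS_def
  by (rule measurable_PiM_single') (auto simp: space_PiM)

lemma comp_meas[measurable]: "(\<lambda>t. t i) \<in> measurable MTS (count_space UNIV \<Otimes>\<^sub>M borel)"
  unfolding MTS_def by simp

lemma canon_meas[measurable]: "canon \<in> measurable MTS MTS"
proof -
  have "(\<lambda>w i. (\<lambda>i w. if i \<in> vert w then w i else (0,0)) i w) \<in> measurable MTS (PiM UNIV (\<lambda>_. count_space UNIV \<Otimes>\<^sub>M borel))"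
    by (rule measurable_PiM_single') (measurable, auto simp: space_PiM space_pair_measure)
  then show ?thesis unfolding canon_def MTS_def[symmetric] by simp
qed


lemma const_ae:
  fixes X :: "'b \<Rightarrow> real"
  assumes M: "prob_space M" and N: "prob_space N"
    and X[measurable]: "X \<in> borel_measurable N"
    and Z1[measurable]: "Z1 \<in> measurable M N" and Z2[measurable]: "Z2 \<in> measurable M N"
    and d1: "distr M N Z1 = N" and d2: "distr M N Z2 = N"
    and E: "E \<in> sets M" "measure M E > 0"
    and ind: "\<And>A B. A \<in> sets N \<Longrightarrow> B \<in> sets N \<Longrightarrow>
       measure M (E \<inter> (Z1 -` A \<inter> space M) \<inter> (Z2 -` B \<inter> space M))
         = measure M E * measure M (Z1 -` A \<inter> space M) * measure M (Z2 -` B \<inter> space M)"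
    and ae: "AE w in M. w \<in> E \<longrightarrow> X (Z1 w) = X (Z2 w)"
  shows "\<exists>c. AE y in N. X y = c"
proof -
  interpret M: prob_space M by fact
  interpret N: prob_space N by fact
  have P1: "measure M (Z1 -` A \<inter> space M) = measure N A" if "A \<in> sets N" for A
    using measure_distr[OF Z1 that] d1 by simp
  have P2: "measure M (Z2 -` A \<inter> space M) = measure N A" if "A \<in> sets N" for A
    using measure_distr[OF Z2 that] d2 by simp
  define A where "A q = {y\<in>space N. X y \<le> q}" for q
  have Asets[measurable]: "A q \<in> sets N" for q unfolding A_def by measurable
  have Bsets: "space N - A q \<in> sets N" for q using Asets by auto
  have m01: "measure N (A q) = 0 \<or> measure N (A q) = 1" for q
  proof -
    let ?S = "E \<inter> (Z1 -` A q \<inter> space M) \<inter> (Z2 -` (space N - A q) \<inter> space M)"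
    have Ss: "?S \<in> sets M" using E Asets Bsets by (intro sets.Int measurable_sets[OF Z1] measurable_sets[OF Z2]) auto
    have "AE w in M. w \<notin> ?S"
      using ae by eventually_elim (auto simp: A_def)
    then have "measure M ?S = 0" using M.prob_eq_0[OF Ss] by simp
    then have "measure M E * measure N (A q) * (1 - measure N (A q)) = 0"
      using ind[OF Asets Bsets] P1[OF Asets] P2[OF Bsets] N.prob_compl[OF Asets] by simp
    then show ?thesis using E(2) by auto
  qed
  define S where "S = {q::real. measure N (A q) = 1}"
  have "\<forall>q\<in>\<rat>. AE y in N. (X y \<le> q \<longleftrightarrow> q \<in> S)"
  proof
    fix q :: real
    show "AE y in N. (X y \<le> q \<longleftrightarrow> q \<in> S)"
    proof (cases "q \<in> S")
      case True
      then have "AE y in N. y \<in> A q" by (intro N.AE_prob_1) (simp add: S_def)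
      then show ?thesis by (rule eventually_mono) (use True in \<open>auto simp: A_def\<close>)
    next
      case False
      then have "measure N (A q) = 0" using m01 by (auto simp: S_def)
      then have "AE y in N. y \<notin> A q" using N.prob_eq_0[OF Asets] by simp
      moreover have "AE y in N. y \<in> space N" by simp
      ultimately show ?thesis by eventually_elim (use False in \<open>auto simp: A_def\<close>)
    qed
  qed
  then have ae2: "AE y in N. \<forall>q\<in>\<rat>. (X y \<le> q \<longleftrightarrow> q \<in> S)"
    by (subst AE_ball_countable) (auto intro: countable_rat)
  have "\<exists>y0\<in>space N. \<forall>q\<in>\<rat>. (X y0 \<le> q \<longleftrightarrow> q \<in> S)"
  proof (rule ccontr)
    assume "\<not> ?thesis"
    then have "AE y in N. \<not> (\<forall>q\<in>\<rat>. (X y \<le> q \<longleftrightarrow> q \<in> S))" by (intro AE_I2) auto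
    with ae2 show False using N.AE_contr by blast
  qed
  then obtain y0 where y0: "\<forall>q\<in>\<rat>. (X y0 \<le> q \<longleftrightarrow> q \<in> S)" by blast
  have "AE y in N. X y = X y0"
    using ae2
  proof eventually_elim
    case (elim y)
    show ?case
    proof (rule ccontr)
      assume ne: "X y \<noteq> X y0"
      show False
      proof (cases "X y < X y0")
        case True
        then obtain q where "q \<in> \<rat>" "X y < q" "q < X y0" using Rats_dense_in_real by blast
        then show False using elim y0 by force
      next
        case False
        then have "X y0 < X y" using ne by auto
        then obtain q where "q \<in> \<rat>" "X y0 < q" "q < X y" using Rats_dense_in_real by blast
        then show False using elim y0 by force
      qed
    qed
  qed
  then show ?thesis by blast
qed


lemma coord_indep:
  assumes M0: "prob_space M0"
  shows "prob_space.indep_vars (PiM UNIV (\<lambda>_::'i. M0)) (\<lambda>_. M0) (\<lambda>i w. w i) UNIV"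
proof -
  let ?W = "PiM UNIV (\<lambda>_::'i. M0)"
  interpret M0: prob_space M0 by fact
  interpret W: prob_space ?W using M0 by (intro prob_space_PiM) 
  show ?thesis
  unfolding W.indep_vars_def2 W.indep_sets_def
  proof (intro conjI ballI allI impI)
    fix i :: 'i show "(\<lambda>w. w i) \<in> measurable ?W M0" by simp
  next
    fix i :: 'i show "{(\<lambda>w. w i) -` A \<inter> space ?W |A. A \<in> sets M0} \<subseteq> W.events"
      by auto
  next
    fix J :: "'i set" and A assume J: "J \<subseteq> UNIV" "J\<noteq>{}" "finite J" 
      and A: "A \<in> Pi J (\<lambda>i. {(\<lambda>w. w i) -` A \<inter> space ?W |A. A \<in> sets M0})"
    then have "\<forall>j\<in>J. \<exists>B. B \<in> sets M0 \<and> A j = (\<lambda>w. w j) -` B \<inter> space ?W" by auto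
    then obtain B where B: "\<And>j. j\<in>J \<Longrightarrow> B j \<in> sets M0 \<and> A j = (\<lambda>w. w j) -` B j \<inter> space ?W"
      by metis
    have i1: "(\<Inter>j\<in>J. A j) = prod_emb UNIV (\<lambda>_. M0) J (PiE J B)"
      using B J(2) by (auto simp: prod_emb_def PiE_iff space_PiM)
    have i2: "A j = prod_emb UNIV (\<lambda>_. M0) {j} (PiE {j} B)" if "j \<in> J" for j
      using B[OF that] by (auto simp: prod_emb_def PiE_iff space_PiM)
    have e1: "emeasure ?W (\<Inter>j\<in>J. A j) = (\<Prod>j\<in>J. emeasure M0 (B j))"
      unfolding i1 using B J by (intro emeasure_PiM_emb) (auto simp: M0)
    have e2: "emeasure ?W (A j) = emeasure M0 (B j)" if "j \<in> J" for j
      unfolding i2[OF that] using B that by (subst emeasure_PiM_emb) (auto simp: M0)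
    have "ennreal (W.prob (\<Inter>j\<in>J. A j)) = ennreal (\<Prod>j\<in>J. W.prob (A j))"
      using e1 e2 by (simp add: W.emeasure_eq_measure M0.emeasure_eq_measure prod_ennreal)
    then show "W.prob (\<Inter>j\<in>J. A j) = (\<Prod>j\<in>J. W.prob (A j))"
      by (simp add: prod_nonneg)
  qed
qed


lemma shift_distr:
  assumes M0: "prob_space M0"
  shows "distr (PiM UNIV (\<lambda>_::nat list. M0)) (PiM UNIV (\<lambda>_. M0)) (\<lambda>w. sub w x) = PiM UNIV (\<lambda>_. M0)"
  using distr_PiM_reindex[of UNIV "\<lambda>_. M0" "(@) x" UNIV] M0
  by (simp add: sub_def inj_on_def restrict_def)

lemma sub_meas_W[measurable]: "(\<lambda>w. sub w x) \<in> measurable (PiM UNIV (\<lambda>_::nat list. M0)) (PiM UNIV (\<lambda>_. M0))"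
  unfolding sub_def by (rule measurable_PiM_single') (auto simp: space_PiM)

lemma indep3:
  assumes M0: "prob_space M0" and sM0: "sets M0 = sets (count_space UNIV \<Otimes>\<^sub>M (borel::real measure))"
    and A: "A \<in> sets (PiM UNIV (\<lambda>_::nat list. M0))" and B: "B \<in> sets (PiM UNIV (\<lambda>_::nat list. M0))"
  defines "W \<equiv> PiM UNIV (\<lambda>_::nat list. M0)"
  defines "E \<equiv> {w \<in> space W. 2 \<le> nu w []}"
  shows "measure W (E \<inter> ((\<lambda>w. sub w [1]) -` A \<inter> space W) \<inter> ((\<lambda>w. sub w [2]) -` B \<inter> space W))
     = measure W E * measure W ((\<lambda>w. sub w [1]) -` A \<inter> space W) * measure W ((\<lambda>w. sub w [2]) -` B \<inter> space W)"
proof -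
  interpret W: prob_space W unfolding W_def using M0 by (intro prob_space_PiM) 
  define K where "K j = (if j = 0 then {[]} else range ((#) j))" for j :: nat
  have ind: "W.indep_vars (\<lambda>j. PiM (K j) (\<lambda>_. M0)) (\<lambda>j \<omega>. restrict (\<lambda>i. \<omega> i) (K j)) {0,1,2}"
    using coord_indep[OF M0, where 'i="nat list"] unfolding W_def[symmetric]
    by (rule W.indep_vars_restrict) (auto simp: K_def disjoint_family_on_def)
  have fstm: "(\<lambda>z. fst z) \<in> measurable M0 (count_space UNIV)"
    by (subst measurable_cong_sets[OF sM0 refl]) simp
  define g where "g j y = (\<lambda>z. y (j # z))" for j :: nat and y :: "nat list \<Rightarrow> nat \<times> real"
  have gm: "g j \<in> measurable (PiM (K j) (\<lambda>_. M0)) W" if "j \<noteq> 0" for j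
    unfolding g_def W_def by (rule measurable_PiM_single') (use that in \<open>auto simp: space_PiM K_def\<close>)
  define A' where "A' j = (if j = 0 then {y \<in> space (PiM (K 0) (\<lambda>_. M0)). 2 \<le> fst (y [])}
      else if j = 1 then g 1 -` A \<inter> space (PiM (K 1) (\<lambda>_. M0)) else g 2 -` B \<inter> space (PiM (K 2) (\<lambda>_. M0)))" for j :: nat
  have A's: "A' j \<in> sets (PiM (K j) (\<lambda>_. M0))" if "j \<in> {0,1,2}" for j
  proof -
    have "(\<lambda>y. fst (y [])) \<in> measurable (PiM (K 0) (\<lambda>_. M0)) (count_space UNIV)"
      using measurable_comp[OF measurable_component_singleton[of "[]" "K 0" "\<lambda>_. M0"] fstm]
      by (simp add: K_def comp_def)
    then have "{y \<in> space (PiM (K 0) (\<lambda>_. M0)). 2 \<le> fst (y [])} \<in> sets (PiM (K 0) (\<lambda>_. M0))"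
      by measurable
    then show ?thesis using that A B gm[of 1] gm[of 2] unfolding A'_def W_def
      by (auto intro!: measurable_sets)
  qed
  have pre: "(\<lambda>\<omega>. restrict (\<lambda>i. \<omega> i) (K j)) -` A' j \<inter> space W =
     (if j = 0 then E else if j = 1 then (\<lambda>w. sub w [1]) -` A \<inter> space W else (\<lambda>w. sub w [2]) -` B \<inter> space W)"
    if "j \<in> {0,1,2}" for j
  proof -
    have r: "g j (restrict w (K j)) = sub w [j]" if "j \<noteq> 0" for j w
      using that by (simp add: g_def sub_def K_def fun_eq_iff)
    have sp: "restrict w (K j) \<in> space (PiM (K j) (\<lambda>_. M0))" if "w \<in> space W" for w
      using that by (auto simp: W_def space_PiM)
    show ?thesis using that r sp 
      by (auto simp: A'_def E_def nu_def K_def)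
  qed
  have "W.prob (\<Inter>j\<in>{0,1,2}. (\<lambda>\<omega>. restrict (\<lambda>i. \<omega> i) (K j)) -` A' j \<inter> space W) =
     (\<Prod>j\<in>{0,1,2}. W.prob ((\<lambda>\<omega>. restrict (\<lambda>i. \<omega> i) (K j)) -` A' j \<inter> space W))"
    by (rule W.indep_varsD[OF ind]) (use A's in auto)
  then have "W.prob (E \<inter> ((\<lambda>w. sub w [1]) -` A \<inter> space W) \<inter> ((\<lambda>w. sub w [2]) -` B \<inter> space W)) = W.prob E * (W.prob ((\<lambda>w. sub w [1]) -` A \<inter> space W) * W.prob ((\<lambda>w. sub w [2]) -` B \<inter> space W))"
    using pre by (simp add: Int_assoc) (metis (no_types, lifting) Int_commute Int_left_commute)
  then show ?thesis by (simp add: mult.assoc)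
qed


lemma AE_shift:
  assumes M0: "prob_space M0" and P[measurable]: "Measurable.pred (PiM UNIV (\<lambda>_::nat list. M0)) P"
    and ae: "AE w in PiM UNIV (\<lambda>_::nat list. M0). P w"
  shows "AE w in PiM UNIV (\<lambda>_::nat list. M0). P (sub w x)"
proof -
  have "AE w in distr (PiM UNIV (\<lambda>_::nat list. M0)) (PiM UNIV (\<lambda>_. M0)) (\<lambda>w. sub w x). P w"
    unfolding shift_distr[OF M0] by (rule ae)
  then show ?thesis by (subst (asm) AE_distr_iff) auto
qed

lemma vert_take: "x \<in> vert t \<Longrightarrow> take k x \<in> vert t"
  using vert_append[of "take k x" "drop k x" t] by simp

lemma flow_eq:
  assumes c: "c \<noteq> 0" and Q: "\<forall>y\<in>vert t. \<phi> (sub t y) = c * \<phi>' (sub t y)" and x: "x \<in> vert t"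
  shows "flow \<phi> t x = flow \<phi>' t x"
  unfolding flow_def
proof (rule prod.cong[OF refl])
  fix k assume k: "k \<in> {..<length x}"
  let ?z = "take k x"
  have z: "?z \<in> vert t" using vert_take[OF x] .
  have zj: "\<phi> (sub t (?z @ [j])) = c * \<phi>' (sub t (?z @ [j]))" if "1 \<le> j" "j \<le> nu t ?z" for j
    using Q z that by (simp add: vert_snoc)
  have xk: "1 \<le> x ! k \<and> x ! k \<le> nu t ?z" using x k by (simp add: vert_def)
  have "(\<Sum>j = 1..nu t ?z. \<phi> (sub t (?z @ [j]))) = c * (\<Sum>j = 1..nu t ?z. \<phi>' (sub t (?z @ [j])))"
    by (simp add: sum_distrib_left zj)
  then show "theta1 \<phi> (sub t ?z) (x ! k) = theta1 \<phi>' (sub t ?z) (x ! k)"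
    unfolding theta1_def using zj[of "x!k"] xk c by simp
qed

lemma flow_single: "flow \<phi> t [i] = theta1 \<phi> t i"
  by (simp add: flow_def)


theorem mainTheorem2:
  fixes p :: "nat pmf" and G :: "real measure" and \<phi> \<phi>' :: "mtree \<Rightarrow> real"
  assumes p0: "pmf p 0 = 0" and p1: "pmf p 1 < 1"
    and mean: "integrable (measure_pmf p) real"
    and G: "prob_space G" "sets G = sets borel" "AE x in G. 0 \<le> x"
    and phi_meas: "\<phi> \<in> borel_measurable MTS" and phi_pos: "AE t in GW p G. 0 < \<phi> t"
    and phi'_meas: "\<phi>' \<in> borel_measurable MTS" and phi'_pos: "AE t in GW p G. 0 < \<phi>' t"
  shows "(AE t in GW p G. \<forall>x\<in>vert t. flow \<phi> t x = flow \<phi>' t x)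
     \<longleftrightarrow> (\<exists>c>0. AE t in GW p G. \<phi> t = c * \<phi>' t)"
proof -
  note [measurable] = phi_meas phi'_meas
  define M0 where "M0 = measure_pmf p \<Otimes>\<^sub>M G"
  define W where "W = PiM UNIV (\<lambda>_::nat list. M0)"
  have M0: "prob_space M0" unfolding M0_def using G(1) by (intro prob_space_pair) (auto simp: prob_space_measure_pmf)
  interpret W: prob_space W unfolding W_def using M0 by (intro prob_space_PiM)
  have sM0: "sets M0 = sets (count_space UNIV \<Otimes>\<^sub>M (borel::real measure))"
    unfolding M0_def by (rule sets_pair_measure_cong) (auto simp: G(2))
  have sW: "sets W = sets MTS"
    unfolding W_def MTS_def by (rule sets_PiM_cong) (auto simp: sM0)
  have mWM: "measurable W N = measurable MTS N" for N :: "'z measure"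
    by (rule measurable_cong_sets[OF sW refl])
  have mNW: "measurable N W = measurable N MTS" for N :: "'z measure"
    by (rule measurable_cong_sets[OF refl sW])
  have canonW[measurable]: "canon \<in> measurable W MTS" using canon_meas by (simp add: mWM)
  have subW[measurable]: "(\<lambda>w. sub w x) \<in> measurable W W" for x using sub_meas by (simp add: mWM mNW)
  have nuW[measurable]: "(\<lambda>w. nu w z) \<in> measurable W (count_space UNIV)" for z using nu_meas by (simp add: mWM)
  have GWd: "GW p G = distr W MTS canon" unfolding GW_def W_def M0_def ..
  have T1: "(AE t in GW p G. P t) \<longleftrightarrow> (AE w in W. P (canon w))" if "Measurable.pred MTS P" for P
    unfolding GWd using that by (intro AE_distr_iff) auto
  have T2: "AE w in W. P (sub w x)" if "Measurable.pred W P" "AE w in W. P w" for P x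
    using AE_shift[OF M0, of P x] that unfolding W_def by simp
  show ?thesis
  proof
    assume H: "AE t in GW p G. \<forall>x\<in>vert t. flow \<phi> t x = flow \<phi>' t x"
    have shiftW: "distr W W (\<lambda>w. sub w x) = W" for x unfolding W_def using shift_distr[OF M0] .
    have H0: "AE w in W. \<forall>x\<in>vert (canon w). flow \<phi> (canon w) x = flow \<phi>' (canon w) x"
      using AE_distrD[OF canonW H[unfolded GWd]] .
    have pos0: "AE w in W. 0 < \<phi> (canon w) \<and> 0 < \<phi>' (canon w)"
      using AE_distrD[OF canonW phi_pos[unfolded GWd]] AE_distrD[OF canonW phi'_pos[unfolded GWd]]
      by eventually_elim auto
    have "\<forall>j. AE w in W. 0 < \<phi> (canon (sub w [j])) \<and> 0 < \<phi>' (canon (sub w [j]))"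
    proof
      fix j
      have pm: "Measurable.pred W (\<lambda>w. 0 < \<phi> (canon w) \<and> 0 < \<phi>' (canon w))" by measurable
      show "AE w in W. 0 < \<phi> (canon (sub w [j])) \<and> 0 < \<phi>' (canon (sub w [j]))"
        using T2[OF pm pos0] by simp
    qed
    then have posj: "AE w in W. \<forall>j. 0 < \<phi> (canon (sub w [j])) \<and> 0 < \<phi>' (canon (sub w [j]))"
      by (subst AE_all_countable) auto
    define X where "X w = \<phi> (canon w) / \<phi>' (canon w)" for w
    have Xm[measurable]: "X \<in> borel_measurable W" unfolding X_def by measurable
    define E where "E = {w \<in> space W. 2 \<le> nu w []}"
    have key: "AE w in W. w \<in> E \<longrightarrow> X (sub w [1]) = X (sub w [2])"
      using H0 posj
    proof eventually_elim
      case (elim w)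
      show ?case
      proof
        assume "w \<in> E" then have nu2: "2 \<le> nu w []" by (simp add: E_def)
        let ?t = "canon w"
        let ?S = "\<Sum>j=1..nu w []. \<phi> (canon (sub w [j]))"
        let ?S' = "\<Sum>j=1..nu w []. \<phi>' (canon (sub w [j]))"
        have vi: "[i] \<in> vert w" if "1 \<le> i" "i \<le> nu w []" for i using that by (simp add: vert_def)
        have subi: "sub ?t [j] = canon (sub w [j])" if "1 \<le> j" "j \<le> nu w []" for j
          using sub_canon[OF vi[OF that]] .
        have S: "(\<Sum>j=1..nu w []. \<phi> (sub ?t [j])) = ?S" by (intro sum.cong) (auto simp: subi)
        have S': "(\<Sum>j=1..nu w []. \<phi>' (sub ?t [j])) = ?S'" by (intro sum.cong) (auto simp: subi)
        have Spos: "?S > 0" using nu2 elim(2) by (intro sum_pos) auto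
        have S'pos: "?S' > 0" using nu2 elim(2) by (intro sum_pos) auto
        have eq: "\<phi> (canon (sub w [i])) / ?S = \<phi>' (canon (sub w [i])) / ?S'" if "1 \<le> i" "i \<le> nu w []" for i
        proof -
          have "flow \<phi> ?t [i] = flow \<phi>' ?t [i]" using elim(1) vi[OF that] by (simp add: vert_canon)
          then show ?thesis unfolding flow_single theta1_def nu_canon_Nil S S' subi[OF that] .
        qed
        have r: "X (sub w [i]) = ?S / ?S'" if "1 \<le> i" "i \<le> nu w []" for i
        proof -
          have a: "\<phi>' (canon (sub w [i])) > 0" using elim(2) by auto
          show ?thesis using eq[OF that] a Spos S'pos unfolding X_def by (auto simp: field_simps)
        qed
        show "X (sub w [1]) = X (sub w [2])" using r[of 1] r[of 2] nu2 by simp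
      qed
    qed
    have Es: "E \<in> sets W" unfolding E_def by measurable
    have Epos: "measure W E > 0"
    proof -
      have E': "E = (\<lambda>w. w []) -` {z \<in> space M0. 2 \<le> fst z} \<inter> space W"
        by (auto simp: E_def nu_def W_def space_PiM)
      have fm: "fst \<in> measurable M0 (measure_pmf p)" unfolding M0_def by (rule measurable_fst)
      have c1: "(\<lambda>w. w []) \<in> measurable W M0" unfolding W_def by simp
      have Ss: "{z \<in> space M0. 2 \<le> fst z} \<in> sets M0"
        using measurable_sets[OF fm, of "{n. 2 \<le> n}"] by (simp add: Int_def conj_commute)
      have dc: "distr W M0 (\<lambda>w. w []) = M0"
        unfolding W_def by (rule distr_PiM_component) (auto simp: M0)
      have "measure W E = measure (distr W M0 (\<lambda>w. w [])) {z \<in> space M0. 2 \<le> fst z}"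
        unfolding E' by (rule measure_distr[OF c1 Ss, symmetric])
      also have "\<dots> = measure M0 {z \<in> space M0. 2 \<le> fst z}" unfolding dc ..
      also have "\<dots> = measure M0 (fst -` {n. 2 \<le> n} \<inter> space M0)"
        by (intro arg_cong[where f="measure M0"]) auto
      also have "\<dots> = measure (distr M0 (measure_pmf p) fst) {n. 2 \<le> n}"
        using measure_distr[OF fm, of "{n. 2 \<le> n}"] by simp
      also have "distr M0 (measure_pmf p) fst = measure_pmf p"
        unfolding M0_def by (rule prob_space.distr_pair_fst[OF G(1)])
      also have "{n::nat. 2 \<le> n} = space (measure_pmf p) - {0, 1}" by auto
      also have "measure (measure_pmf p) (space (measure_pmf p) - {0, 1}) = 1 - (pmf p 0 + pmf p 1)"
        by (subst measure_pmf.prob_compl) (auto simp: measure_measure_pmf_finite)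
      finally show ?thesis using p0 p1 by simp
    qed
    have ind: "measure W (E \<inter> ((\<lambda>w. sub w [1]) -` A \<inter> space W) \<inter> ((\<lambda>w. sub w [2]) -` B \<inter> space W))
     = measure W E * measure W ((\<lambda>w. sub w [1]) -` A \<inter> space W) * measure W ((\<lambda>w. sub w [2]) -` B \<inter> space W)"
      if "A \<in> sets W" "B \<in> sets W" for A B
      using indep3[OF M0 sM0, of A B] that unfolding W_def E_def by simp
    have "\<exists>c. AE w in W. X w = c"
    proof (rule const_ae[of W W X "\<lambda>w. sub w [1]" "\<lambda>w. sub w [2]" E])
      show "prob_space W" by (rule W.prob_space_axioms)
      show "prob_space W" by (rule W.prob_space_axioms)
      show "distr W W (\<lambda>w. sub w [1]) = W" by (rule shiftW)
      show "distr W W (\<lambda>w. sub w [2]) = W" by (rule shiftW)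
    qed (use Es Epos ind key in auto)
    then obtain c where cX: "AE w in W. X w = c" by blast
    have cpos: "c > 0"
    proof (rule ccontr)
      assume nc: "\<not> c > 0"
      have "AE w in W. False" using cX pos0 by eventually_elim (use nc in \<open>auto simp: X_def\<close>)
      then show False by simp
    qed
    have "AE w in W. \<phi> (canon w) = c * \<phi>' (canon w)"
      using cX pos0 by eventually_elim (auto simp: X_def field_simps)
    moreover have pm2: "Measurable.pred MTS (\<lambda>t. \<phi> t = c * \<phi>' t)" unfolding pred_def by measurable
    ultimately have "AE t in GW p G. \<phi> t = c * \<phi>' t" by (simp add: T1)
    with cpos show "\<exists>c>0. AE t in GW p G. \<phi> t = c * \<phi>' t" by blast
  next
    assume "\<exists>c>0. AE t in GW p G. \<phi> t = c * \<phi>' t"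
    then obtain c where c: "c > 0" and ae: "AE t in GW p G. \<phi> t = c * \<phi>' t" by blast
    have pm3: "Measurable.pred MTS (\<lambda>t. \<phi> t = c * \<phi>' t)" unfolding pred_def by measurable
    have ae0: "AE w in W. \<phi> (canon w) = c * \<phi>' (canon w)" using ae T1[OF pm3] by simp
    have pm4: "Measurable.pred W (\<lambda>w. \<phi> (canon w) = c * \<phi>' (canon w))" unfolding pred_def by measurable
    have "\<forall>x. AE w in W. \<phi> (canon (sub w x)) = c * \<phi>' (canon (sub w x))"
      using T2[OF pm4 ae0] by simp
    then have "AE w in W. \<forall>x. \<phi> (canon (sub w x)) = c * \<phi>' (canon (sub w x))"
      by (subst AE_all_countable) auto
    then have "AE w in W. (\<lambda>t. \<forall>x. x \<in> vert t \<longrightarrow> \<phi> (sub t x) = c * \<phi>' (sub t x)) (canon w)"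
      by eventually_elim (auto simp: vert_canon sub_canon)
    moreover have eqp[measurable]: "Measurable.pred MTS (\<lambda>t. \<phi> (sub t x) = c * \<phi>' (sub t x))" for x
      unfolding pred_def by measurable
    have "Measurable.pred MTS (\<lambda>t. \<forall>x. x \<in> vert t \<longrightarrow> \<phi> (sub t x) = c * \<phi>' (sub t x))"
      by measurable
    ultimately have "AE t in GW p G. \<forall>x. x \<in> vert t \<longrightarrow> \<phi> (sub t x) = c * \<phi>' (sub t x)"
      by (simp add: T1)
    then show "AE t in GW p G. \<forall>x\<in>vert t. flow \<phi> t x = flow \<phi>' t x"
    proof eventually_elim
      case (elim t)
      have "\<forall>y\<in>vert t. \<phi> (sub t y) = c * \<phi>' (sub t y)" using elim by blast
      then show ?case using flow_eq[of c t \<phi> \<phi>'] c by auto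
    qed
  qed
qed

end
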